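(* Let $\textsc{prop}$ be a finite set of propositional variables and $w$ a propositional variable not in $\textsc{prop}$. Then (1) $\mathrm{PL}_{\{\oplus_3\}}[\textsc{prop}]\leq_{pc}\mathrm{PL}_{\{\mathsf{oxor}\}}[\textsc{prop}\cup\{w\}]$, and (2) $\mathrm{PL}_{\{\oplus_3\}}[\textsc{prop}]\leq_{pc}\mathrm{PL}_{\{\mathsf{aimp}\}}[\textsc{prop}\cup\{w\}]$.
   Context: $\oplus_3(x,y,z)=x\oplus y\oplus z$, $\mathsf{oxor}(x,y,z)=x\lor(y\oplus z)$, $\mathsf{aimp}(x,y,z)=x\land(y\to z)$. For a set $O$ of Boolean functions and finite variable set $P$, $\mathrm{PL}_O[P]$ is the set of formulas $\phi::=x\mid f(\phi_1,\dots,\phi_n)$ with $x\in P$, $f\in O$, viewed as the concept class whose concepts are these formulas, whose examples are truth assignments $V:P\to\{0,1\}$, and where $\lambda(\phi)$ is the set of satisfying assignments. For concept classes $\mathcal{C}_i=(C_i,E_i,\lambda_i)$, $\mathcal{C}_1\leq_{pc}\mathcal{C}_2$ means there are $f:C_1\to C_2$ and $h:E_1\to E_2$ such that (i) for all $c\in C_1,e\in E_1$: $e\in\lambda_1(c)$ iff $h(e)\in\lambda_2(f(c))$; and (ii) for each $e\in E_2$, either $e\in\lambda_2(f(c))$ for all $c\in C_1$, or for no $c\in C_1$, or there is $e'\in E_1$ with $\{c\mid e\in\lambda_2(f(c))\}=\{c\mid e'\in\lambda_1(c)\}$. *)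

theory Defs
  imports Main
begin

(* Boolean functions of given arity: an operator is a pair (n, f) where n is the arity
   and f is applied to the list of the n argument values. *)
type_synonym boolfun = "nat \<times> (bool list \<Rightarrow> bool)"

datatype 'v form = Var 'v | App boolfun "'v form list"

fun wf_form :: "boolfun set \<Rightarrow> 'v set \<Rightarrow> 'v form \<Rightarrow> bool" where
  "wf_form Ops P (Var x) = (x \<in> P)"
| "wf_form Ops P (App g args) = (g \<in> Ops \<and> length args = fst g \<and> (\<forall>a\<in>set args. wf_form Ops P a))"

(* truth assignment V : P -> {0,1}, represented by the set of variables mapped to 1 *)
fun eval_form :: "'v set \<Rightarrow> 'v form \<Rightarrow> bool" where
  "eval_form V (Var x) = (x \<in> V)"
| "eval_form V (App g args) = snd g (map (eval_form V) args)"

definition xor3 :: "bool list \<Rightarrow> bool" where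
  "xor3 xs = (xs ! 0 \<noteq> (xs ! 1 \<noteq> xs ! 2))"
definition oxor :: "bool list \<Rightarrow> bool" where
  "oxor xs = (xs ! 0 \<or> (xs ! 1 \<noteq> xs ! 2))"
definition aimp :: "bool list \<Rightarrow> bool" where
  "aimp xs = (xs ! 0 \<and> (xs ! 1 \<longrightarrow> xs ! 2))"

definition PL_concepts :: "boolfun set \<Rightarrow> 'v set \<Rightarrow> 'v form set" where
  "PL_concepts Ops P = {\<phi>. wf_form Ops P \<phi>}"
definition PL_examples :: "'v set \<Rightarrow> 'v set set" where
  "PL_examples P = Pow P"
definition PL_lambda :: "'v set \<Rightarrow> 'v form \<Rightarrow> 'v set set" where
  "PL_lambda P \<phi> = {V \<in> Pow P. eval_form V \<phi>}"

(* polynomial-time-free "concept class reduction" <=_pc as defined in the paper *)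
definition pc_reduces ::
  "'c1 set \<Rightarrow> 'e1 set \<Rightarrow> ('c1 \<Rightarrow> 'e1 set) \<Rightarrow> 'c2 set \<Rightarrow> 'e2 set \<Rightarrow> ('c2 \<Rightarrow> 'e2 set) \<Rightarrow> bool" where
  "pc_reduces C1 E1 lam1 C2 E2 lam2 \<longleftrightarrow>
    (\<exists>f h. (\<forall>c\<in>C1. f c \<in> C2) \<and> (\<forall>e\<in>E1. h e \<in> E2) \<and>
       (\<forall>c\<in>C1. \<forall>e\<in>E1. e \<in> lam1 c \<longleftrightarrow> h e \<in> lam2 (f c)) \<and>
       (\<forall>e\<in>E2. (\<forall>c\<in>C1. e \<in> lam2 (f c)) \<or> (\<forall>c\<in>C1. e \<notin> lam2 (f c)) \<or>
          (\<exists>e'\<in>E1. {c\<in>C1. e \<in> lam2 (f c)} = {c\<in>C1. e' \<in> lam1 c})))"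

abbreviation PL_pc_reduces ::
  "boolfun set \<Rightarrow> 'v set \<Rightarrow> boolfun set \<Rightarrow> 'v set \<Rightarrow> bool" where
  "PL_pc_reduces Ops1 P1 Ops2 P2 \<equiv>
     pc_reduces (PL_concepts Ops1 P1) (PL_examples P1) (PL_lambda P1)
                (PL_concepts Ops2 P2) (PL_examples P2) (PL_lambda P2)"

end

theory Submission
  imports Defs
begin

definition Oo :: "'v form \<Rightarrow> 'v form \<Rightarrow> 'v form \<Rightarrow> 'v form" where
  "Oo a b c = App (3, oxor) [a, b, c]"
definition Aa :: "'v form \<Rightarrow> 'v form \<Rightarrow> 'v form \<Rightarrow> 'v form" where
  "Aa a b c = App (3, aimp) [a, b, c]"

definition XO :: "'v \<Rightarrow> 'v form \<Rightarrow> 'v form \<Rightarrow> 'v form \<Rightarrow> 'v form" where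
  "XO w a b c = Oo (Var w) a (Oo (Var w) b c)"
definition XA :: "'v \<Rightarrow> 'v form \<Rightarrow> 'v form \<Rightarrow> 'v form \<Rightarrow> 'v form" where
  "XA w a b c = Aa (Aa (Var w) a (Aa (Var w) b c)) (Aa (Aa (Var w) a c) b c) (Aa (Aa c a b) b a)"

fun trO :: "'v \<Rightarrow> 'v form \<Rightarrow> 'v form" where
  "trO w (Var x) = Oo (Var w) (Var x) (Var w)"
| "trO w (App g args) = XO w (map (trO w) args ! 0) (map (trO w) args ! 1) (map (trO w) args ! 2)"

fun trA :: "'v \<Rightarrow> 'v form \<Rightarrow> 'v form" where
  "trA w (Var x) = Aa (Var w) (Var w) (Var x)"
| "trA w (App g args) = XA w (map (trA w) args ! 0) (map (trA w) args ! 1) (map (trA w) args ! 2)"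

lemma len3: "length args = 3 \<Longrightarrow> \<exists>a b c. args = [a, b, c]"
  by (cases args; cases "tl args"; cases "tl (tl args)"; auto simp: numeral_3_eq_3)

lemma trO_wf: "wf_form {(3, xor3)} P \<phi> \<Longrightarrow> wf_form {(3, oxor)} (P \<union> {w}) (trO w \<phi>)"
proof (induction \<phi>)
  case (Var x) then show ?case by (simp add: Oo_def)
next
  case (App g args)
  then obtain a b c where abc: "args = [a,b,c]" using len3 by force
  show ?case using App abc by (simp add: XO_def Oo_def)
qed

lemma trA_wf: "wf_form {(3, xor3)} P \<phi> \<Longrightarrow> wf_form {(3, aimp)} (P \<union> {w}) (trA w \<phi>)"
proof (induction \<phi>)
  case (Var x) then show ?case by (simp add: Aa_def)
next
  case (App g args)
  then obtain a b c where abc: "args = [a,b,c]" using len3 by force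
  show ?case using App abc by (simp add: XA_def Aa_def)
qed

lemma XO_eval: "eval_form V (XO w a b c) = (w \<in> V \<or> (eval_form V a \<noteq> (eval_form V b \<noteq> eval_form V c)))"
  by (cases "w \<in> V") (simp_all add: XO_def Oo_def oxor_def)

lemma XA_eval: "eval_form V (XA w a b c) = (w \<in> V \<and> (eval_form V a \<noteq> (eval_form V b \<noteq> eval_form V c)))"
proof -
  have "\<And>p q r s. (((s \<and> (p \<longrightarrow> (s \<and> (q \<longrightarrow> r)))) \<and> ((s \<and> (p \<longrightarrow> r)) \<and> (q \<longrightarrow> r) \<longrightarrow> (r \<and> (p \<longrightarrow> q)) \<and> (q \<longrightarrow> p))) = (s \<and> (p \<noteq> (q \<noteq> r))))"
    by blast
  then show ?thesis by (simp add: XA_def Aa_def aimp_def)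
qed

lemma trO_eval: "wf_form {(3, xor3)} P \<phi> \<Longrightarrow> eval_form V (trO w \<phi>) = (w \<in> V \<or> eval_form V \<phi>)"
proof (induction \<phi>)
  case (Var x) then show ?case by (auto simp: Oo_def oxor_def)
next
  case (App g args)
  then obtain a b c where abc: "args = [a,b,c]" using len3 by force
  show ?case using App abc by (cases "w \<in> V") (simp_all add: XO_eval xor3_def)
qed

lemma trA_eval: "wf_form {(3, xor3)} P \<phi> \<Longrightarrow> eval_form V (trA w \<phi>) = (w \<in> V \<and> eval_form V \<phi>)"
proof (induction \<phi>)
  case (Var x) then show ?case by (auto simp: Aa_def aimp_def)
next
  case (App g args)
  then obtain a b c where abc: "args = [a,b,c]" using len3 by force
  show ?case using App abc by (cases "w \<in> V") (simp_all add: XA_eval xor3_def)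
qed

lemma eval_local: "wf_form Ops P \<phi> \<Longrightarrow> V \<inter> P = V' \<inter> P \<Longrightarrow> eval_form V \<phi> = eval_form V' \<phi>"
proof (induction \<phi>)
  case (Var x) then show ?case by auto
next
  case (App g args)
  have "\<forall>a\<in>set args. eval_form V a = eval_form V' a"
    using App.IH App.prems by simp
  then have "map (eval_form V) args = map (eval_form V') args" by (simp only: map_eq_conv)
  then show ?case by (metis eval_form.simps(2))
qed

lemma lamO: "c \<in> PL_concepts {(3, xor3)} P \<Longrightarrow>
   (e \<in> PL_lambda Q (trO w c)) = (e \<subseteq> Q \<and> (w \<in> e \<or> eval_form e c))"
  unfolding PL_concepts_def PL_lambda_def using trO_eval[of P c e w] by simp

lemma lamA: "c \<in> PL_concepts {(3, xor3)} P \<Longrightarrow>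
   (e \<in> PL_lambda Q (trA w c)) = (e \<subseteq> Q \<and> (w \<in> e \<and> eval_form e c))"
  unfolding PL_concepts_def PL_lambda_def using trA_eval[of P c e w] by simp

lemma lam1: "c \<in> PL_concepts {(3, xor3)} P \<Longrightarrow> (e \<in> PL_lambda P c) = (e \<subseteq> P \<and> eval_form e c)"
  unfolding PL_lambda_def by simp

lemma locC: "c \<in> PL_concepts {(3, xor3)} P \<Longrightarrow> w \<notin> P \<Longrightarrow> eval_form (insert w e) c = eval_form e c"
  unfolding PL_concepts_def
  by (rule eval_local[of "{(3, xor3)}" P]) auto

lemma locC': "c \<in> PL_concepts {(3, xor3)} P \<Longrightarrow> w \<notin> P \<Longrightarrow> eval_form (e - {w}) c = eval_form e c"
  unfolding PL_concepts_def
  by (rule eval_local[of "{(3, xor3)}" P]) auto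

theorem propositionA7:
  fixes Props :: "'v set" and w :: 'v
  assumes "finite Props" and "w \<notin> Props"
  shows "PL_pc_reduces {(3, xor3)} Props {(3, oxor)} (Props \<union> {w})
       \<and> PL_pc_reduces {(3, xor3)} Props {(3, aimp)} (Props \<union> {w})"
proof
  let ?C = "PL_concepts {(3, xor3)} Props"
  show "PL_pc_reduces {(3, xor3)} Props {(3, oxor)} (Props \<union> {w})"
    unfolding pc_reduces_def
  proof (intro exI[of _ "trO w"] exI[of _ id] conjI ballI)
    fix c assume "c \<in> ?C"
    then show "trO w c \<in> PL_concepts {(3, oxor)} (Props \<union> {w})"
      unfolding PL_concepts_def using trO_wf[of Props c w] by simp
  next
    fix e assume "e \<in> PL_examples Props"
    then show "id e \<in> PL_examples (Props \<union> {w})" unfolding PL_examples_def by auto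
  next
    fix c e assume c: "c \<in> ?C" and e: "e \<in> PL_examples Props"
    then have "w \<notin> e" "e \<subseteq> Props" using assms(2) unfolding PL_examples_def by blast+
    then show "(e \<in> PL_lambda Props c) = (id e \<in> PL_lambda (Props \<union> {w}) (trO w c))"
      unfolding id_apply lamO[OF c] lam1[OF c] by auto
  next
    fix e assume e: "e \<in> PL_examples (Props \<union> {w})"
    then have eP: "e \<subseteq> Props \<union> {w}" unfolding PL_examples_def by blast
    show "(\<forall>c\<in>?C. e \<in> PL_lambda (Props \<union> {w}) (trO w c)) \<or>
          (\<forall>c\<in>?C. e \<notin> PL_lambda (Props \<union> {w}) (trO w c)) \<or>
          (\<exists>e'\<in>PL_examples Props. {c \<in> ?C. e \<in> PL_lambda (Props \<union> {w}) (trO w c)} =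
              {c \<in> ?C. e' \<in> PL_lambda Props c})"
    proof (cases "w \<in> e")
      case True
      have "\<forall>c\<in>?C. e \<in> PL_lambda (Props \<union> {w}) (trO w c)"
      proof
        fix c assume c: "c \<in> ?C"
        show "e \<in> PL_lambda (Props \<union> {w}) (trO w c)" unfolding lamO[OF c] using eP True by blast
      qed
      then show ?thesis by blast
    next
      case False
      then have eP': "e \<subseteq> Props" using eP by blast
      then have "e \<in> PL_examples Props" unfolding PL_examples_def by blast
      moreover have "{c \<in> ?C. e \<in> PL_lambda (Props \<union> {w}) (trO w c)} =
              {c \<in> ?C. e \<in> PL_lambda Props c}"
      proof (intro Collect_cong conj_cong refl)
        fix c assume c: "c \<in> ?C"
        show "(e \<in> PL_lambda (Props \<union> {w}) (trO w c)) = (e \<in> PL_lambda Props c)"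
          unfolding lamO[OF c] lam1[OF c] using False eP eP' by blast
      qed
      ultimately show ?thesis by blast
    qed
  qed
next
  let ?C = "PL_concepts {(3, xor3)} Props"
  show "PL_pc_reduces {(3, xor3)} Props {(3, aimp)} (Props \<union> {w})"
    unfolding pc_reduces_def
  proof (intro exI[of _ "trA w"] exI[of _ "insert w"] conjI ballI)
    fix c assume "c \<in> ?C"
    then show "trA w c \<in> PL_concepts {(3, aimp)} (Props \<union> {w})"
      unfolding PL_concepts_def using trA_wf[of Props c w] by simp
  next
    fix e assume "e \<in> PL_examples Props"
    then show "insert w e \<in> PL_examples (Props \<union> {w})" unfolding PL_examples_def by blast
  next
    fix c e assume c: "c \<in> ?C" and e: "e \<in> PL_examples Props"
    then have "e \<subseteq> Props" unfolding PL_examples_def by blast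
    moreover have "eval_form (insert w e) c = eval_form e c" using locC[OF c assms(2)] .
    ultimately show "(e \<in> PL_lambda Props c) = (insert w e \<in> PL_lambda (Props \<union> {w}) (trA w c))"
      unfolding lamA[OF c] lam1[OF c] by auto
  next
    fix e assume e: "e \<in> PL_examples (Props \<union> {w})"
    then have eP: "e \<subseteq> Props \<union> {w}" unfolding PL_examples_def by blast
    show "(\<forall>c\<in>?C. e \<in> PL_lambda (Props \<union> {w}) (trA w c)) \<or>
          (\<forall>c\<in>?C. e \<notin> PL_lambda (Props \<union> {w}) (trA w c)) \<or>
          (\<exists>e'\<in>PL_examples Props. {c \<in> ?C. e \<in> PL_lambda (Props \<union> {w}) (trA w c)} =
              {c \<in> ?C. e' \<in> PL_lambda Props c})"
    proof (cases "w \<in> e")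
      case False
      have "\<forall>c\<in>?C. e \<notin> PL_lambda (Props \<union> {w}) (trA w c)"
      proof
        fix c assume c: "c \<in> ?C"
        show "e \<notin> PL_lambda (Props \<union> {w}) (trA w c)" unfolding lamA[OF c] using False by blast
      qed
      then show ?thesis by blast
    next
      case True
      have eP': "e - {w} \<subseteq> Props" using eP by blast
      then have "e - {w} \<in> PL_examples Props" unfolding PL_examples_def by blast
      moreover have "{c \<in> ?C. e \<in> PL_lambda (Props \<union> {w}) (trA w c)} =
              {c \<in> ?C. e - {w} \<in> PL_lambda Props c}"
      proof (intro Collect_cong conj_cong refl)
        fix c assume c: "c \<in> ?C"
        show "(e \<in> PL_lambda (Props \<union> {w}) (trA w c)) = (e - {w} \<in> PL_lambda Props c)"
          unfolding lamA[OF c] lam1[OF c] locC'[OF c assms(2)] using True eP eP' by blast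
      qed
      ultimately show ?thesis by blast
    qed
  qed
qed

end
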